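(* Let $G,H$ be loopless multigraphs on a finite set $V$ with $\deg_G(v)=\deg_H(v)=:d(v)$ for all $v$, let $n\ge2$, and for $M\in\mathcal{PM}(G\cup H)$ let $$c_M=n^{\mathrm{cycles}(M)}\prod_{w\in V}\frac{(-2)^{\underline{\underline{g_M(w)}}}}{(n+2d(w)-4)^{\underline{\underline{g_M(w)}}}}.$$ Fix a vertex $v$ and a collection $M'=(M'_w)_{w\ne v}$ of perfect matchings of the half-edges at each vertex $w\ne v$ of $G\cup H$. If the matching induced by $M'$ at $v$ contains a pair of two $G$-half-edges, then $$\sum_{M}c_M=0,$$ where the sum is over all $M\in\mathcal{PM}(G\cup H)$ that agree with $M'$ at every vertex $w\ne v$.
   Context: For integer $k\ge0$: $a^{\underline{\underline{k}}}=a(a-2)\cdots(a-2k+2)$ (empty product 1). $G\cup H$ is the multigraph on $V$ whose edge multiset is the disjoint union of $E(G)$ and $E(H)$; each edge has two half-edges, one at each endpoint, called $G$-half-edges or $H$-half-edges according to whether the edge comes from $G$ or $H$. $\mathcal{PM}(G\cup H)$ is the set of collections $M=(M_w)_{w\in V}$ with $M_w$ a perfect matching of the half-edges at $w$. $\Gamma_M$ is the multigraph on half-edges with an edge joining the two half-edges of each edge and an edge for each matched pair; $\mathrm{cycles}(M)$ is its number of components (all cycles). $g_M(w)$ is the number of pairs of $M_w$ consisting of two $G$-half-edges. The matching induced by $M'$ at $v$ pairs each half-edge $h$ at $v$ with the half-edge at $v$ reached by starting at $h$, traversing its edge, and then alternately following $M'$-matched pairs and edges until first returning to a half-edge at $v$.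 *)

theory Defs
  imports Complex_Main
begin

text \<open>The two half-edges of an
  edge e of the union G \<union> H are (x, False) and (x, True), where x = Inl e for an edge of G
  and x = Inr f for an edge of H.\<close>

type_synonym ('v, 'e) mgraph = "'e set \<times> ('e \<Rightarrow> 'v \<times> 'v)"

definition loopless_multigraph :: "'v set \<Rightarrow> ('v, 'e) mgraph \<Rightarrow> bool" where
  "loopless_multigraph V G \<longleftrightarrow> finite (fst G) \<and>
     (\<forall>e\<in>fst G. fst (snd G e) \<in> V \<and> snd (snd G e) \<in> V \<and> fst (snd G e) \<noteq> snd (snd G e))"

definition endpt :: "('v, 'e) mgraph \<Rightarrow> 'e \<Rightarrow> bool \<Rightarrow> 'v" where
  "endpt G e b = (if b then snd (snd G e) else fst (snd G e))"

definition deg :: "('v, 'e) mgraph \<Rightarrow> 'v \<Rightarrow> nat" where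
  "deg G w = card {(e, b). e \<in> fst G \<and> endpt G e b = w}"

type_synonym ('e, 'f) half = "('e + 'f) \<times> bool"

definition halfs :: "('v, 'e) mgraph \<Rightarrow> ('v, 'f) mgraph \<Rightarrow> ('e, 'f) half set" where
  "halfs G H = {(Inl e, b) | e b. e \<in> fst G} \<union> {(Inr f, b) | f b. f \<in> fst H}"

definition hvert :: "('v, 'e) mgraph \<Rightarrow> ('v, 'f) mgraph \<Rightarrow> ('e, 'f) half \<Rightarrow> 'v" where
  "hvert G H h = (case fst h of Inl e \<Rightarrow> endpt G e (snd h) | Inr f \<Rightarrow> endpt H f (snd h))"

definition halfs_at :: "('v, 'e) mgraph \<Rightarrow> ('v, 'f) mgraph \<Rightarrow> 'v \<Rightarrow> ('e, 'f) half set" where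
  "halfs_at G H w = {h \<in> halfs G H. hvert G H h = w}"

definition is_G_half :: "('e, 'f) half \<Rightarrow> bool" where
  "is_G_half h \<longleftrightarrow> isl (fst h)"

definition opp :: "('e, 'f) half \<Rightarrow> ('e, 'f) half" where
  "opp h = (fst h, \<not> snd h)"

definition perfect_matching :: "'a set \<Rightarrow> 'a set set \<Rightarrow> bool" where
  "perfect_matching S P \<longleftrightarrow> (\<forall>p\<in>P. p \<subseteq> S \<and> card p = 2) \<and> (\<forall>x\<in>S. \<exists>!p. p \<in> P \<and> x \<in> p)"

text \<open>PM(G \<union> H): collections (M_w)_{w\<in>V}, represented as functions that are {} outside V.\<close>
definition PM :: "'v set \<Rightarrow> ('v, 'e) mgraph \<Rightarrow> ('v, 'f) mgraph \<Rightarrow> ('v \<Rightarrow> ('e, 'f) half set set) set" where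
  "PM V G H = {M. (\<forall>w\<in>V. perfect_matching (halfs_at G H w) (M w)) \<and> (\<forall>w. w \<notin> V \<longrightarrow> M w = {})}"

definition Gamma_rel :: "'v set \<Rightarrow> ('v, 'e) mgraph \<Rightarrow> ('v, 'f) mgraph \<Rightarrow> ('v \<Rightarrow> ('e, 'f) half set set)
    \<Rightarrow> (('e, 'f) half \<times> ('e, 'f) half) set" where
  "Gamma_rel V G H M = {(h, opp h) | h. h \<in> halfs G H}
     \<union> {(x, y). \<exists>w\<in>V. \<exists>p\<in>M w. x \<in> p \<and> y \<in> p \<and> x \<noteq> y}"

definition cycles :: "'v set \<Rightarrow> ('v, 'e) mgraph \<Rightarrow> ('v, 'f) mgraph \<Rightarrow> ('v \<Rightarrow> ('e, 'f) half set set) \<Rightarrow> nat" where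
  "cycles V G H M = card (halfs G H // ((Gamma_rel V G H M)\<^sup>*))"

definition gM :: "('v \<Rightarrow> ('e, 'f) half set set) \<Rightarrow> 'v \<Rightarrow> nat" where
  "gM M w = card {p \<in> M w. \<forall>h\<in>p. is_G_half h}"

definition ff2 :: "real \<Rightarrow> nat \<Rightarrow> real" where
  "ff2 a k = (\<Prod>i<k. a - 2 * real i)"

definition cM :: "'v set \<Rightarrow> ('v, 'e) mgraph \<Rightarrow> ('v, 'f) mgraph \<Rightarrow> nat \<Rightarrow> ('v \<Rightarrow> ('e, 'f) half set set) \<Rightarrow> real" where
  "cM V G H n M = real n ^ cycles V G H M *
     (\<Prod>w\<in>V. ff2 (-2) (gM M w) / ff2 (real n + 2 * real (deg G w) - 4) (gM M w))"

definition mate :: "('v, 'e) mgraph \<Rightarrow> ('v, 'f) mgraph \<Rightarrow> ('v \<Rightarrow> ('e, 'f) half set set)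
    \<Rightarrow> ('e, 'f) half \<Rightarrow> ('e, 'f) half" where
  "mate G H M' h = (THE h'. h' \<noteq> h \<and> {h, h'} \<in> M' (hvert G H h))"

text \<open>{h, h'} is a pair of the matching induced by M' at v: start at h, traverse its edge,
  then alternately follow M'-matched pairs and edges until first returning to v.\<close>
definition induced_pair :: "('v, 'e) mgraph \<Rightarrow> ('v, 'f) mgraph \<Rightarrow> ('v \<Rightarrow> ('e, 'f) half set set)
    \<Rightarrow> 'v \<Rightarrow> ('e, 'f) half \<Rightarrow> ('e, 'f) half \<Rightarrow> bool" where
  "induced_pair G H M' v h h' \<longleftrightarrow>
     (let f = (\<lambda>x. opp (mate G H M' x)) in
      \<exists>k. h' = (f ^^ k) (opp h) \<and> hvert G H h' = v \<and>
          (\<forall>j<k. hvert G H ((f ^^ j) (opp h)) \<noteq> v))"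

end

theory Submission
  imports Defs
begin


definition partner :: "'a set set \<Rightarrow> 'a \<Rightarrow> 'a" where
  "partner P x = (THE y. y \<noteq> x \<and> {x, y} \<in> P)"

lemma pm_iff: "perfect_matching S P \<longleftrightarrow>
   (\<forall>p\<in>P. \<exists>x y. p = {x,y} \<and> x \<noteq> y \<and> x \<in> S \<and> y \<in> S) \<and> (\<forall>x\<in>S. \<exists>!p. p \<in> P \<and> x \<in> p)"
proof -
  have "(p \<subseteq> S \<and> card p = 2) \<longleftrightarrow> (\<exists>x y. p = {x,y} \<and> x \<noteq> y \<and> x \<in> S \<and> y \<in> S)" for p
    unfolding card_2_iff by blast
  then show ?thesis unfolding perfect_matching_def by (simp only:)
qed

lemma pm_ex1: "perfect_matching S P \<Longrightarrow> x \<in> S \<Longrightarrow> \<exists>!p. p \<in> P \<and> x \<in> p"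
  unfolding perfect_matching_def by (elim conjE) (rule bspec)

lemma pm_pair: "perfect_matching S P \<Longrightarrow> p \<in> P \<Longrightarrow> \<exists>x y. p = {x,y} \<and> x \<noteq> y \<and> x \<in> S \<and> y \<in> S"
  unfolding pm_iff by blast

lemma pm_sub: "perfect_matching S P \<Longrightarrow> p \<in> P \<Longrightarrow> p \<subseteq> S"
  unfolding perfect_matching_def by blast

lemma pm_unique: "perfect_matching S P \<Longrightarrow> p \<in> P \<Longrightarrow> q \<in> P \<Longrightarrow> x \<in> p \<Longrightarrow> x \<in> q \<Longrightarrow> p = q"
  unfolding perfect_matching_def by blast

lemma pm_ex: "perfect_matching S P \<Longrightarrow> x \<in> S \<Longrightarrow> \<exists>y. y \<noteq> x \<and> {x,y} \<in> P \<and> y \<in> S"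
proof -
  assume a: "perfect_matching S P" "x \<in> S"
  then obtain p where p: "p \<in> P" "x \<in> p" unfolding perfect_matching_def by blast
  from pm_pair[OF a(1) p(1)] obtain u w where "p = {u,w}" "u \<noteq> w" "u \<in> S" "w \<in> S" by blast
  with p show ?thesis by (metis doubleton_eq_iff insertE singletonD)
qed

lemma partner_eq: "perfect_matching S P \<Longrightarrow> {x,y} \<in> P \<Longrightarrow> x \<noteq> y \<Longrightarrow> partner P x = y"
  unfolding partner_def
proof (rule the_equality)
  assume a: "perfect_matching S P" "{x,y} \<in> P" "x \<noteq> y"
  then show "y \<noteq> x \<and> {x, y} \<in> P" by auto
  fix y' assume y': "y' \<noteq> x \<and> {x, y'} \<in> P"
  have "{x,y} = {x,y'}" using pm_unique[OF a(1) a(2), of "{x,y'}" x] y' by auto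
  with y' show "y' = y" by (metis doubleton_eq_iff)
qed

lemma partner: "perfect_matching S P \<Longrightarrow> x \<in> S \<Longrightarrow> {x, partner P x} \<in> P \<and> partner P x \<noteq> x \<and> partner P x \<in> S"
  using pm_ex partner_eq by metis

lemma partner_in: "perfect_matching S P \<Longrightarrow> p \<in> P \<Longrightarrow> x \<in> p \<Longrightarrow> p = {x, partner P x}"
proof -
  assume a: "perfect_matching S P" "p \<in> P" "x \<in> p"
  from pm_pair[OF a(1,2)] obtain u w where "p = {u,w}" "u \<noteq> w" by blast
  with a show ?thesis using partner_eq[OF a(1)] by (metis insert_commute insertE singletonD)
qed

lemma pm_insert: "perfect_matching T Q \<Longrightarrow> u \<notin> T \<Longrightarrow> w \<notin> T \<Longrightarrow> u \<noteq> w \<Longrightarrow>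
   perfect_matching (insert u (insert w T)) (insert {u,w} Q)"
proof -
  assume a: "perfect_matching T Q" "u \<notin> T" "w \<notin> T" "u \<noteq> w"
  show ?thesis unfolding pm_iff
  proof (intro conjI ballI)
    fix p assume p: "p \<in> insert {u,w} Q"
    show "\<exists>x y. p = {x,y} \<and> x \<noteq> y \<and> x \<in> insert u (insert w T) \<and> y \<in> insert u (insert w T)"
    proof (cases "p = {u,w}")
      case True then show ?thesis using a(4) by (intro exI[of _ u] exI[of _ w]) simp
    next
      case False
      then have "p \<in> Q" using p by simp
      then obtain x y where xy: "p = {x,y}" "x \<noteq> y" "x \<in> T" "y \<in> T" using pm_pair[OF a(1)] by blast
      then show ?thesis by (intro exI[of _ x] exI[of _ y]) simp
    qed
  next
    fix x assume x: "x \<in> insert u (insert w T)"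
    show "\<exists>!p. p \<in> insert {u,w} Q \<and> x \<in> p"
    proof (cases "x \<in> T")
      case True
      then have ex: "\<exists>!p. p \<in> Q \<and> x \<in> p" by (rule pm_ex1[OF a(1)])
      have "x \<notin> {u,w}" using True a by auto
      then have "\<And>p. (p \<in> insert {u,w} Q \<and> x \<in> p) = (p \<in> Q \<and> x \<in> p)" by auto
      then show ?thesis using ex by simp
    next
      case False
      then have xuw: "x \<in> {u,w}" using x by simp
      show ?thesis
      proof (rule ex1I[of _ "{u,w}"])
        show "{u, w} \<in> insert {u, w} Q \<and> x \<in> {u, w}" using xuw by simp
        fix q assume q: "q \<in> insert {u, w} Q \<and> x \<in> q"
        show "q = {u,w}"
        proof (rule ccontr)
          assume "q \<noteq> {u,w}"
          then have "q \<in> Q" using q by simp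
          then have "q \<subseteq> T" by (rule pm_sub[OF a(1)])
          then show False using q False by auto
        qed
      qed
    qed
  qed
qed

lemma pm_remove: "perfect_matching T Q \<Longrightarrow> {u,w} \<in> Q \<Longrightarrow> u \<noteq> w \<Longrightarrow>
   perfect_matching (T - {u,w}) (Q - {{u,w}})"
proof -
  assume a: "perfect_matching T Q" "{u,w} \<in> Q" "u \<noteq> w"
  show ?thesis unfolding pm_iff
  proof (intro conjI ballI)
    fix p assume p: "p \<in> Q - {{u,w}}"
    then have pQ: "p \<in> Q" "p \<noteq> {u,w}" by auto
    obtain x y where xy: "p = {x,y}" "x \<noteq> y" "x \<in> T" "y \<in> T" using pm_pair[OF a(1) pQ(1)] by blast
    have "x \<notin> {u,w}" "y \<notin> {u,w}"
      using pm_unique[OF a(1) a(2) pQ(1), of x] pm_unique[OF a(1) a(2) pQ(1), of y] pQ(2) xy(1) by auto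
    then show "\<exists>x y. p = {x,y} \<and> x \<noteq> y \<and> x \<in> T - {u,w} \<and> y \<in> T - {u,w}"
      using xy by (intro exI[of _ x] exI[of _ y]) auto
  next
    fix x assume x: "x \<in> T - {u,w}"
    have "x \<in> T" using x by simp
    then have ex: "\<exists>!p. p \<in> Q \<and> x \<in> p" by (rule pm_ex1[OF a(1)])
    have "\<And>p. (p \<in> Q - {{u,w}} \<and> x \<in> p) = (p \<in> Q \<and> x \<in> p)" using x by blast
    then show "\<exists>!p. p \<in> Q - {{u,w}} \<and> x \<in> p" using ex by simp
  qed
qed

lemma finite_pms: "finite S \<Longrightarrow> finite {P. perfect_matching S P}"
proof -
  assume "finite S"
  moreover have "{P. perfect_matching S P} \<subseteq> Pow (Pow S)" using pm_sub by blast
  ultimately show ?thesis by (simp add: finite_subset)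
qed



lemma rtrancl_add_redundant:
  assumes "(p,q) \<in> R\<^sup>*" "(q,p) \<in> R\<^sup>*"
  shows "(R \<union> {(p,q),(q,p)})\<^sup>* = R\<^sup>*"
proof
  show "(R \<union> {(p, q), (q, p)})\<^sup>* \<subseteq> R\<^sup>*"
    by (rule rtrancl_subset_rtrancl) (use assms in auto)
  show "R\<^sup>* \<subseteq> (R \<union> {(p, q), (q, p)})\<^sup>*" by (rule rtrancl_mono) auto
qed

lemma sym_rt: "sym R \<Longrightarrow> (p,q) \<in> R\<^sup>* \<Longrightarrow> (q,p) \<in> R\<^sup>*"
  by (meson sym_rtrancl symD)

lemma merge_char:
  assumes sR: "sym R"
  shows "(z,u) \<in> (R \<union> {(a,x),(x,a)})\<^sup>* \<longleftrightarrow>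
     (z,u) \<in> R\<^sup>* \<or> ((z,a) \<in> R\<^sup>* \<and> (x,u) \<in> R\<^sup>*) \<or> ((z,x) \<in> R\<^sup>* \<and> (a,u) \<in> R\<^sup>*)"
    (is "_ \<in> ?E' \<longleftrightarrow> ?C z u")
proof
  assume "(z,u) \<in> ?E'"
  then show "?C z u"
  proof (induction rule: rtrancl_induct)
    case base then show ?case by auto
  next
    case (step u t)
    from step.hyps(2) consider "(u,t) \<in> R" | "u = a" "t = x" | "u = x" "t = a" by auto
    then show ?case
    proof cases
      case 1 then show ?thesis using step.IH by (meson rtrancl.rtrancl_into_rtrancl)
    next
      case 2 then show ?thesis using step.IH sR by (meson rtrancl.rtrancl_refl)
    next
      case 3 then show ?thesis using step.IH sR by (meson rtrancl.rtrancl_refl)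
    qed
  qed
next
  have m: "R\<^sup>* \<subseteq> ?E'" by (rule rtrancl_mono) auto
  have ax: "(a,x) \<in> ?E'" "(x,a) \<in> ?E'" by auto
  assume "?C z u"
  then show "(z,u) \<in> ?E'" using m ax by (meson rtrancl_trans subsetD)
qed

lemma card_merge:
  assumes RX: "R \<subseteq> X \<times> X" and sR: "sym R" and fin: "finite X" and aX: "a \<in> X" and xX: "x \<in> X"
    and nax: "(a,x) \<notin> R\<^sup>*"
  shows "card (X // (R \<union> {(a,x),(x,a)})\<^sup>*) + 1 = card (X // R\<^sup>*)"
proof -
  let ?E = "R\<^sup>*" and ?E' = "(R \<union> {(a,x),(x,a)})\<^sup>*"
  define Ca where "Ca = ?E `` {a}"
  define Cx where "Cx = ?E `` {x}"
  have symE: "\<And>p q. (p,q) \<in> ?E \<Longrightarrow> (q,p) \<in> ?E" using sym_rt[OF sR] by blast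
  have cls: "\<And>p q. (p,q) \<in> ?E \<Longrightarrow> ?E `` {p} = ?E `` {q}"
    using symE by (meson rtrancl_trans Image_singleton_iff subsetI subset_antisym)
  have trE: "\<And>p q r. (p,q) \<in> ?E \<Longrightarrow> (q,r) \<in> ?E \<Longrightarrow> (p,r) \<in> ?E" by (rule rtrancl_trans)
  have img: "\<And>z. ?E' `` {z} = (if z \<in> Ca \<union> Cx then Ca \<union> Cx else ?E `` {z})"
  proof -
    fix z
    show "?E' `` {z} = (if z \<in> Ca \<union> Cx then Ca \<union> Cx else ?E `` {z})"
    proof (cases "z \<in> Ca \<union> Cx")
      case True
      then have zz: "(z,a) \<in> ?E \<or> (z,x) \<in> ?E" unfolding Ca_def Cx_def using symE by blast
      have "\<And>u. (z,u) \<in> ?E' \<longleftrightarrow> (a,u) \<in> ?E \<or> (x,u) \<in> ?E"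
      proof -
        fix u
        from zz show "(z,u) \<in> ?E' \<longleftrightarrow> (a,u) \<in> ?E \<or> (x,u) \<in> ?E"
        proof
          assume za: "(z,a) \<in> ?E"
          have nzx: "(z,x) \<notin> ?E" using za symE trE nax by blast
          have "(z,u) \<in> ?E \<longleftrightarrow> (a,u) \<in> ?E" using za symE trE by blast
          then show ?thesis unfolding merge_char[OF sR] using za nzx by blast
        next
          assume zx: "(z,x) \<in> ?E"
          have nza: "(z,a) \<notin> ?E" using zx symE trE nax by blast
          have "(z,u) \<in> ?E \<longleftrightarrow> (x,u) \<in> ?E" using zx symE trE by blast
          then show ?thesis unfolding merge_char[OF sR] using zx nza by blast
        qed
      qed
      then show ?thesis using True unfolding Ca_def Cx_def by auto
    next
      case False
      then have "(z,a) \<notin> ?E" "(z,x) \<notin> ?E" unfolding Ca_def Cx_def using symE by auto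
      then have "\<And>u. (z,u) \<in> ?E' \<longleftrightarrow> (z,u) \<in> ?E" unfolding merge_char[OF sR] by blast
      then show ?thesis using False by auto
    qed
  qed
  have CaQ: "Ca \<in> X // ?E" unfolding Ca_def quotient_def using aX by auto
  have CxQ: "Cx \<in> X // ?E" unfolding Cx_def quotient_def using xX by auto
  have neq: "Ca \<noteq> Cx" unfolding Ca_def Cx_def using nax by auto
  have eq: "X // ?E' = insert (Ca \<union> Cx) (X // ?E - {Ca, Cx})"
  proof
    show "X // ?E' \<subseteq> insert (Ca \<union> Cx) (X // ?E - {Ca, Cx})"
    proof
      fix C assume "C \<in> X // ?E'"
      then obtain z where z: "z \<in> X" "C = ?E' `` {z}" unfolding quotient_def by auto
      show "C \<in> insert (Ca \<union> Cx) (X // ?E - {Ca, Cx})"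
      proof (cases "z \<in> Ca \<union> Cx")
        case True then show ?thesis using z img by auto
      next
        case False
        then have "?E `` {z} \<noteq> Ca" "?E `` {z} \<noteq> Cx" by auto
        then show ?thesis using z img False unfolding quotient_def by auto
      qed
    qed
  next
    show "insert (Ca \<union> Cx) (X // ?E - {Ca, Cx}) \<subseteq> X // ?E'"
    proof
      fix C assume C: "C \<in> insert (Ca \<union> Cx) (X // ?E - {Ca, Cx})"
      show "C \<in> X // ?E'"
      proof (cases "C = Ca \<union> Cx")
        case True
        have "a \<in> Ca" unfolding Ca_def by auto
        then have "?E' `` {a} = Ca \<union> Cx" using img by auto
        then show ?thesis using True aX unfolding quotient_def by auto
      next
        case False
        then obtain z where z: "z \<in> X" "C = ?E `` {z}" "C \<noteq> Ca" "C \<noteq> Cx" using C unfolding quotient_def by auto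
        have "z \<notin> Ca \<union> Cx"
        proof
          assume "z \<in> Ca \<union> Cx"
          then have "(a,z) \<in> ?E \<or> (x,z) \<in> ?E" unfolding Ca_def Cx_def by auto
          then have "?E `` {z} = Ca \<or> ?E `` {z} = Cx" unfolding Ca_def Cx_def using cls by metis
          then show False using z by auto
        qed
        then have "?E' `` {z} = C" using img z by auto
        then show ?thesis using z unfolding quotient_def by auto
      qed
    qed
  qed
  have finQ: "finite (X // ?E)" unfolding quotient_def using fin by simp
  have notin: "Ca \<union> Cx \<notin> X // ?E - {Ca, Cx}"
  proof
    assume "Ca \<union> Cx \<in> X // ?E - {Ca, Cx}"
    then obtain z where z: "Ca \<union> Cx = ?E `` {z}" "Ca \<union> Cx \<noteq> Ca" unfolding quotient_def by auto
    have "a \<in> Ca" unfolding Ca_def by auto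
    then have "(z,a) \<in> ?E" using z by auto
    then have "?E `` {z} = Ca" using cls symE unfolding Ca_def by metis
    then show False using z by auto
  qed
  have "card (X // ?E') = card (X // ?E - {Ca, Cx}) + 1"
    unfolding eq using finQ notin by simp
  also have "card (X // ?E - {Ca, Cx}) = card (X // ?E) - 2"
    using finQ CaQ CxQ neq by (simp add: card_Diff_subset)
  also have "card (X // ?E) \<ge> 2"
    using finQ CaQ CxQ neq by (metis card_2_iff card_mono empty_subsetI insert_subset)
  ultimately show ?thesis by linarith
qed



lemma mate_partner: "mate G H M' h = partner (M' (hvert G H h)) h"
  by (simp add: mate_def partner_def)

lemma opp_opp[simp]: "opp (opp h) = h" by (simp add: opp_def)

lemma opp_halfs: "h \<in> halfs G H \<Longrightarrow> opp h \<in> halfs G H"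
  by (auto simp: halfs_def opp_def)

lemma halfs_at_sub: "halfs_at G H w \<subseteq> halfs G H" by (auto simp: halfs_at_def)

lemma finite_halfs: "finite (fst G) \<Longrightarrow> finite (fst H) \<Longrightarrow> finite (halfs G H)"
proof -
  assume "finite (fst G)" "finite (fst H)"
  then have "finite ((\<lambda>(e,b). (Inl e, b)) ` (fst G \<times> (UNIV::bool set)) \<union> (\<lambda>(e,b). (Inr e, b)) ` (fst H \<times> (UNIV::bool set)))"
    by (intro finite_UnI finite_imageI finite_cartesian_product) auto
  moreover have "halfs G H = (\<lambda>(e,b). (Inl e, b)) ` (fst G \<times> UNIV) \<union> (\<lambda>(e,b). (Inr e, b)) ` (fst H \<times> UNIV)"
    unfolding halfs_def by auto
  ultimately show ?thesis by simp
qed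

lemma hvert_V: "loopless_multigraph V G \<Longrightarrow> loopless_multigraph V H \<Longrightarrow> h \<in> halfs G H \<Longrightarrow> hvert G H h \<in> V"
  by (auto simp: loopless_multigraph_def halfs_def hvert_def endpt_def)

lemma hvert_opp: "loopless_multigraph V G \<Longrightarrow> loopless_multigraph V H \<Longrightarrow> h \<in> halfs G H \<Longrightarrow>
   hvert G H (opp h) \<noteq> hvert G H h"
  by (auto simp: loopless_multigraph_def halfs_def hvert_def endpt_def opp_def split: if_splits)

locale LS =
  fixes V :: "'v set" and G :: "('v, 'e) mgraph" and H :: "('v, 'f) mgraph"
    and n :: nat and v :: 'v and M' :: "'v \<Rightarrow> ('e, 'f) half set set"
    and a b :: "('e, 'f) half"
  assumes finV: "finite V"
    and lG: "loopless_multigraph V G" and lH: "loopless_multigraph V H"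
    and degeq: "\<forall>w\<in>V. deg G w = deg H w"
    and n2: "n \<ge> 2"
    and vV: "v \<in> V"
    and M'pm: "\<forall>w\<in>V - {v}. perfect_matching (halfs_at G H w) (M' w)"
    and aS: "a \<in> halfs_at G H v" and bS: "b \<in> halfs_at G H v" and ab: "a \<noteq> b"
    and Ga: "is_G_half a" and Gb: "is_G_half b"
    and ind: "induced_pair G H M' v a b"
begin

abbreviation "hv \<equiv> hvert G H"
abbreviation "HS \<equiv> halfs G H"
definition "S = halfs_at G H v"
definition "S' = S - {a,b}"
definition "Mx Q = (\<lambda>w. if w \<in> V - {v} then M' w else {})(v := Q)"
definition "B = {(h, opp h) | h. h \<in> HS} \<union> {(x,y). \<exists>w\<in>V-{v}. \<exists>p\<in>M' w. x \<in> p \<and> y \<in> p \<and> x \<noteq> y}"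
definition "Mat Q = {(x,y). \<exists>p\<in>Q. x \<in> p \<and> y \<in> p \<and> x \<noteq> y}"
definition "f = (\<lambda>x. opp (mate G H M' x))"
definition "pth j = (f ^^ j) (opp a)"

lemma Gamma_Mx: "Gamma_rel V G H (Mx Q) = B \<union> Mat Q"
proof -
  have mx: "\<And>w. w \<in> V \<Longrightarrow> Mx Q w = (if w = v then Q else M' w)" by (simp add: Mx_def)
  have e: "\<And>x y. (\<exists>w\<in>V. \<exists>p\<in>Mx Q w. x \<in> p \<and> y \<in> p \<and> x \<noteq> y) \<longleftrightarrow>
     (\<exists>w\<in>V-{v}. \<exists>p\<in>M' w. x \<in> p \<and> y \<in> p \<and> x \<noteq> y) \<or> (\<exists>p\<in>Q. x \<in> p \<and> y \<in> p \<and> x \<noteq> y)"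
  proof -
    fix x y
    show "(\<exists>w\<in>V. \<exists>p\<in>Mx Q w. x \<in> p \<and> y \<in> p \<and> x \<noteq> y) \<longleftrightarrow>
     (\<exists>w\<in>V-{v}. \<exists>p\<in>M' w. x \<in> p \<and> y \<in> p \<and> x \<noteq> y) \<or> (\<exists>p\<in>Q. x \<in> p \<and> y \<in> p \<and> x \<noteq> y)"
    proof
      assume "\<exists>w\<in>V. \<exists>p\<in>Mx Q w. x \<in> p \<and> y \<in> p \<and> x \<noteq> y"
      then obtain w p where "w \<in> V" "p \<in> Mx Q w" "x \<in> p \<and> y \<in> p \<and> x \<noteq> y" by blast
      then show "(\<exists>w\<in>V-{v}. \<exists>p\<in>M' w. x \<in> p \<and> y \<in> p \<and> x \<noteq> y) \<or> (\<exists>p\<in>Q. x \<in> p \<and> y \<in> p \<and> x \<noteq> y)"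
        using mx[of w] by (cases "w = v") auto
    next
      assume "(\<exists>w\<in>V-{v}. \<exists>p\<in>M' w. x \<in> p \<and> y \<in> p \<and> x \<noteq> y) \<or> (\<exists>p\<in>Q. x \<in> p \<and> y \<in> p \<and> x \<noteq> y)"
      then show "\<exists>w\<in>V. \<exists>p\<in>Mx Q w. x \<in> p \<and> y \<in> p \<and> x \<noteq> y"
      proof
        assume "\<exists>w\<in>V-{v}. \<exists>p\<in>M' w. x \<in> p \<and> y \<in> p \<and> x \<noteq> y"
        then obtain w p where "w \<in> V - {v}" "p \<in> M' w" "x \<in> p \<and> y \<in> p \<and> x \<noteq> y" by blast
        then show ?thesis using mx[of w] by (intro bexI[of _ w]) auto
      next
        assume "\<exists>p\<in>Q. x \<in> p \<and> y \<in> p \<and> x \<noteq> y"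
        then show ?thesis using mx[of v] vV by (intro bexI[of _ v]) auto
      qed
    qed
  qed
  show ?thesis unfolding Gamma_rel_def B_def Mat_def
    by (rule set_eqI) (simp only: mem_Collect_eq Un_iff case_prod_unfold e disj_assoc)
qed

lemma aH: "a \<in> HS" and bH: "b \<in> HS" and hva: "hv a = v" and hvb: "hv b = v"
  using aS bS by (auto simp: halfs_at_def)

lemma S_H: "S \<subseteq> HS" unfolding S_def by (rule halfs_at_sub)

lemma mate_facts:
  assumes "z \<in> HS" "hv z \<in> V - {v}"
  shows "{z, mate G H M' z} \<in> M' (hv z) \<and> mate G H M' z \<noteq> z \<and> mate G H M' z \<in> halfs_at G H (hv z)"
proof -
  have pm: "perfect_matching (halfs_at G H (hv z)) (M' (hv z))" using M'pm assms by blast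
  have "z \<in> halfs_at G H (hv z)" using assms by (auto simp: halfs_at_def)
  from partner[OF pm this] show ?thesis by (simp add: mate_partner)
qed

lemma mate_hv: "z \<in> HS \<Longrightarrow> hv z \<in> V - {v} \<Longrightarrow> hv (mate G H M' z) = hv z \<and> mate G H M' z \<in> HS"
  using mate_facts[of z] by (auto simp: halfs_at_def)

lemma mate_mate: "z \<in> HS \<Longrightarrow> hv z \<in> V - {v} \<Longrightarrow> mate G H M' (mate G H M' z) = z"
proof -
  assume z: "z \<in> HS" "hv z \<in> V - {v}"
  have pm: "perfect_matching (halfs_at G H (hv z)) (M' (hv z))" using M'pm z by blast
  have "{mate G H M' z, z} \<in> M' (hv z)" using mate_facts[OF z] by (simp add: insert_commute)
  then show ?thesis using partner_eq[OF pm] mate_facts[OF z] mate_hv[OF z]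
    by (simp add: mate_partner)
qed


definition "kk = (SOME k. b = pth k \<and> (\<forall>j<k. hv (pth j) \<noteq> v))"

lemma kk: "b = pth kk" "\<And>j. j < kk \<Longrightarrow> hv (pth j) \<noteq> v"
proof -
  have "\<exists>k. b = pth k \<and> (\<forall>j<k. hv (pth j) \<noteq> v)"
    using ind unfolding induced_pair_def pth_def f_def Let_def by blast
  from someI_ex[OF this] show "b = pth kk" "\<And>j. j < kk \<Longrightarrow> hv (pth j) \<noteq> v"
    unfolding kk_def by blast+
qed

lemma pth_Suc: "pth (Suc j) = opp (mate G H M' (pth j))"
  by (simp add: pth_def f_def)

lemma pth_H: "j \<le> kk \<Longrightarrow> pth j \<in> HS"
proof (induction j)
  case 0 then show ?case using aH by (simp add: pth_def opp_halfs)
next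
  case (Suc j)
  then have "pth j \<in> HS" "hv (pth j) \<in> V - {v}" using kk(2)[of j] hvert_V[OF lG lH] by auto
  then show ?case using mate_hv pth_Suc opp_halfs by metis
qed

lemma pth_lt: "j < kk \<Longrightarrow> pth j \<in> HS \<and> hv (pth j) \<in> V - {v}"
  using pth_H[of j] kk(2)[of j] hvert_V[OF lG lH] by auto

lemma kk_pos: "kk > 0"
proof (rule ccontr)
  assume "\<not> kk > 0"
  then have "b = opp a" using kk(1) by (simp add: pth_def)
  then show False using hvert_opp[OF lG lH aH] hva hvb by simp
qed

lemma B_sym: "sym B"
proof (rule symI)
  fix x y assume "(x,y) \<in> B"
  then consider h where "h \<in> HS" "x = h" "y = opp h"
    | "(x,y) \<in> {(x,y). \<exists>w\<in>V-{v}. \<exists>p\<in>M' w. x \<in> p \<and> y \<in> p \<and> x \<noteq> y}"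
    unfolding B_def by blast
  then show "(y,x) \<in> B"
  proof cases
    case 1
    then have "y \<in> HS" using opp_halfs by simp
    then have "(y, opp y) \<in> B" unfolding B_def by blast
    then show ?thesis using 1 by simp
  next
    case 2 then show ?thesis unfolding B_def by blast
  qed
qed

lemma Mat_sym: "sym (Mat Q)" unfolding Mat_def sym_def by auto

lemma B_opp: "h \<in> HS \<Longrightarrow> (h, opp h) \<in> B" unfolding B_def by blast
lemma B_M': "w \<in> V - {v} \<Longrightarrow> p \<in> M' w \<Longrightarrow> x \<in> p \<Longrightarrow> y \<in> p \<Longrightarrow> x \<noteq> y \<Longrightarrow> (x,y) \<in> B"
  unfolding B_def by auto

lemma conn_ab: "(a,b) \<in> B\<^sup>*"
proof -
  have "j \<le> kk \<Longrightarrow> (a, pth j) \<in> B\<^sup>*" for j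
  proof (induction j)
    case 0
    have "(a, opp a) \<in> B" using B_opp aH by simp
    then show ?case unfolding pth_def by simp
  next
    case (Suc j)
    then have j: "pth j \<in> HS" "hv (pth j) \<in> V - {v}" using pth_lt by auto
    let ?m = "mate G H M' (pth j)"
    have mf: "{pth j, ?m} \<in> M' (hv (pth j))" "?m \<noteq> pth j" using mate_facts[OF j] by auto
    have "(pth j, ?m) \<in> B" by (rule B_M'[OF j(2) mf(1)]) (use mf(2) in auto)
    moreover have "(?m, opp ?m) \<in> B" using B_opp mate_hv[OF j] by simp
    moreover have "(a, pth j) \<in> B\<^sup>*" using Suc by simp
    ultimately have "(a, opp ?m) \<in> B\<^sup>*" by (meson rtrancl.rtrancl_into_rtrancl)
    then show ?case by (simp add: pth_Suc)
  qed
  from this[of kk] show ?thesis using kk(1) by simp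
qed

lemma nbr:
  assumes pm: "perfect_matching S Q" and zu: "(z,u) \<in> B \<union> Mat Q"
  shows "u = opp z \<or> (z \<in> HS \<and> hv z \<in> V - {v} \<and> u = mate G H M' z) \<or> (z \<in> S \<and> u = partner Q z)"
proof -
  consider "u = opp z" | w p where "w \<in> V - {v}" "p \<in> M' w" "z \<in> p" "u \<in> p" "z \<noteq> u"
    | p where "p \<in> Q" "z \<in> p" "u \<in> p" "z \<noteq> u"
  proof -
    assume c1: "u = opp z \<Longrightarrow> thesis"
      and c2: "\<And>w p. w \<in> V - {v} \<Longrightarrow> p \<in> M' w \<Longrightarrow> z \<in> p \<Longrightarrow> u \<in> p \<Longrightarrow> z \<noteq> u \<Longrightarrow> thesis"
      and c3: "\<And>p. p \<in> Q \<Longrightarrow> z \<in> p \<Longrightarrow> u \<in> p \<Longrightarrow> z \<noteq> u \<Longrightarrow> thesis"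
    from zu have "(z,u) \<in> {(h, opp h) | h. h \<in> HS} \<or> (z,u) \<in> {(x,y). \<exists>w\<in>V-{v}. \<exists>p\<in>M' w. x \<in> p \<and> y \<in> p \<and> x \<noteq> y}
       \<or> (z,u) \<in> Mat Q" unfolding B_def by blast
    then show thesis
    proof (elim disjE)
      assume "(z,u) \<in> {(h, opp h) | h. h \<in> HS}" then show thesis using c1 by blast
    next
      assume "(z,u) \<in> {(x,y). \<exists>w\<in>V-{v}. \<exists>p\<in>M' w. x \<in> p \<and> y \<in> p \<and> x \<noteq> y}"
      then obtain w p where "w \<in> V - {v}" "p \<in> M' w" "z \<in> p" "u \<in> p" "z \<noteq> u" by blast
      then show thesis by (rule c2)
    next
      assume "(z,u) \<in> Mat Q"
      then obtain p where "p \<in> Q" "z \<in> p" "u \<in> p" "z \<noteq> u" unfolding Mat_def by blast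
      then show thesis by (rule c3)
    qed
  qed
  then show ?thesis
  proof cases
    case 1 then show ?thesis by simp
  next
    case 2
    have pmw: "perfect_matching (halfs_at G H w) (M' w)" using M'pm 2 by blast
    have "z \<in> halfs_at G H w" using pm_sub[OF pmw 2(2)] 2 by auto
    then have zw: "z \<in> HS" "hv z = w" by (auto simp: halfs_at_def)
    have "u = partner (M' w) z" using partner_in[OF pmw 2(2,3)] 2 by auto
    then show ?thesis using zw 2 by (simp add: mate_partner)
  next
    case 3
    have "z \<in> S" using pm_sub[OF pm 3(1)] 3 by auto
    moreover have "u = partner Q z" using partner_in[OF pm 3(1,2)] 3 by auto
    ultimately show ?thesis by simp
  qed
qed

definition "C0 = {a} \<union> pth ` {..kk} \<union> (\<lambda>j. mate G H M' (pth j)) ` {..<kk}"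

lemma pthC0: "j \<le> kk \<Longrightarrow> pth j \<in> C0" unfolding C0_def by blast
lemma mateC0: "j < kk \<Longrightarrow> mate G H M' (pth j) \<in> C0" unfolding C0_def by blast
lemma aC0: "a \<in> C0" unfolding C0_def by blast
lemma bC0: "b \<in> C0" using pthC0[of kk] kk(1) by simp
lemma oppaC0: "opp a \<in> C0" using pthC0[of 0] by (simp add: pth_def)

lemma C0_cases:
  assumes "z \<in> C0"
  obtains "z = a" | "z = b" | j where "j < kk" "z = pth j" | j where "j < kk" "z = mate G H M' (pth j)"
proof -
  from assms consider "z = a" | j where "j \<le> kk" "z = pth j" | j where "j < kk" "z = mate G H M' (pth j)"
    unfolding C0_def by blast
  then show thesis
  proof cases
    case (2 j)
    show thesis
    proof (cases "j = kk")
      case True then have "z = b" using 2 kk(1) by simp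
      then show thesis using that(2) by simp
    next
      case False then have "j < kk" using 2 by simp
      then show thesis using that(3) 2 by blast
    qed
  qed (use that in auto)
qed

lemma C0_closed:
  assumes pm: "perfect_matching S Q" and abQ: "{a,b} \<in> Q" and z: "z \<in> C0" and zu: "(z,u) \<in> B \<union> Mat Q"
  shows "u \<in> C0"
proof -
  have pa: "partner Q a = b" using partner_eq[OF pm abQ ab] .
  have pb: "partner Q b = a" using partner_eq[OF pm _ ab[symmetric]] abQ by (simp add: insert_commute)
  have nS: "\<And>y. y \<in> S \<Longrightarrow> hv y = v" unfolding S_def halfs_at_def by auto
  note N = nbr[OF pm zu]
  from z show ?thesis
  proof (cases rule: C0_cases)
    case 1
    then show ?thesis using N pa hva oppaC0 bC0 by auto
  next
    case 2
    have "b = opp (mate G H M' (pth (kk - 1)))" using kk(1) kk_pos pth_Suc[of "kk - 1"] by simp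
    then have "opp b = mate G H M' (pth (kk - 1))" by (metis opp_opp)
    then have "opp b \<in> C0" using mateC0[of "kk - 1"] kk_pos by simp
    then show ?thesis using N pb hvb 2 aC0 by auto
  next
    case (3 j)
    have "opp (pth j) \<in> C0"
    proof (cases j)
      case 0 then show ?thesis using aC0 by (simp add: pth_def)
    next
      case (Suc i) then show ?thesis using 3 pth_Suc[of i] mateC0[of i] by simp
    qed
    moreover have "mate G H M' (pth j) \<in> C0" using mateC0 3 by simp
    moreover have "z \<notin> S" using 3 pth_lt nS by fastforce
    ultimately show ?thesis using N 3 by auto
  next
    case (4 j)
    have j: "pth j \<in> HS" "hv (pth j) \<in> V - {v}" using pth_lt 4 by auto
    have "opp z = pth (Suc j)" using 4 pth_Suc by simp
    then have "opp z \<in> C0" using pthC0[of "Suc j"] 4 by simp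
    moreover have "mate G H M' z = pth j" using mate_mate[OF j] 4 by simp
    then have "mate G H M' z \<in> C0" using pthC0[of j] 4 by simp
    moreover have "z \<notin> S" using 4 mate_hv[OF j] j nS by fastforce
    ultimately show ?thesis using N by auto
  qed
qed

lemma C0_reach:
  assumes pm: "perfect_matching S Q" and abQ: "{a,b} \<in> Q" and r: "(a,u) \<in> (B \<union> Mat Q)\<^sup>*"
  shows "u \<in> C0"
  using r
proof (induction rule: rtrancl_induct)
  case base then show ?case unfolding C0_def by auto
next
  case (step y z) then show ?case using C0_closed[OF pm abQ] by blast
qed

lemma notC0: "x \<in> S' \<Longrightarrow> x \<notin> C0"
proof
  assume x: "x \<in> S'" "x \<in> C0"
  have hx: "hv x = v" "x \<noteq> a" "x \<noteq> b" using x unfolding S'_def S_def halfs_at_def by auto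
  from x(2) show False
  proof (cases rule: C0_cases)
    case (3 j) then show ?thesis using pth_lt hx by auto
  next
    case (4 j)
    have j: "pth j \<in> HS" "hv (pth j) \<in> V - {v}" using pth_lt 4 by auto
    then show ?thesis using mate_hv[OF j] hx 4 by auto
  qed (use hx in auto)
qed

definition "Cy Q = cycles V G H (Mx Q)"

lemma Cy_eq: "Cy Q = card (HS // (B \<union> Mat Q)\<^sup>*)"
  unfolding Cy_def cycles_def Gamma_Mx ..

lemma Mat_insert: "Mat (insert r Q) = Mat {r} \<union> Mat Q" unfolding Mat_def by blast
lemma Mat_pair: "p \<noteq> q \<Longrightarrow> Mat {{p,q}} = {(p,q),(q,p)}"
proof
  assume "p \<noteq> q"
  show "Mat {{p,q}} \<subseteq> {(p,q),(q,p)}" unfolding Mat_def by auto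
  show "{(p,q),(q,p)} \<subseteq> Mat {{p,q}}" unfolding Mat_def using \<open>p \<noteq> q\<close> by auto
qed
lemma Mat_ins: "p \<noteq> q \<Longrightarrow> Mat (insert {p,q} Q) = Mat Q \<union> {(p,q),(q,p)}"
  using Mat_insert[of "{p,q}" Q] Mat_pair[of p q] by auto
lemma Mat_rem: "{p,q} \<in> Q \<Longrightarrow> p \<noteq> q \<Longrightarrow> Mat Q = Mat (Q - {{p,q}}) \<union> {(p,q),(q,p)}"
  using Mat_ins[of p q "Q - {{p,q}}"] by (simp add: insert_absorb)

lemma finHS: "finite HS"
proof -
  have "finite (fst G)" "finite (fst H)" using lG lH unfolding loopless_multigraph_def by simp_all
  then show ?thesis by (rule finite_halfs)
qed

lemma B_sub: "B \<subseteq> HS \<times> HS"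
proof
  fix z assume "z \<in> B"
  then show "z \<in> HS \<times> HS"
    unfolding B_def
  proof (elim UnE)
    assume "z \<in> {(h, opp h) |h. h \<in> HS}"
    then obtain h where "z = (h, opp h)" "h \<in> HS" by blast
    then show ?thesis using opp_halfs[of h] by simp
  next
    assume "z \<in> {(x, y). \<exists>w\<in>V - {v}. \<exists>p\<in>M' w. x \<in> p \<and> y \<in> p \<and> x \<noteq> y}"
    then obtain x y w p where o: "z = (x,y)" "w \<in> V - {v}" "p \<in> M' w" "x \<in> p" "y \<in> p" by blast
    have pmw: "perfect_matching (halfs_at G H w) (M' w)" using M'pm o(2) by simp
    have "p \<subseteq> halfs_at G H w" by (rule pm_sub[OF pmw o(3)])
    then show ?thesis using halfs_at_sub[of G H w] o by auto
  qed
qed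

lemma Mat_sub: "perfect_matching T Q \<Longrightarrow> T \<subseteq> HS \<Longrightarrow> Mat Q \<subseteq> HS \<times> HS"
proof
  fix z assume a: "perfect_matching T Q" "T \<subseteq> HS" "z \<in> Mat Q"
  then obtain x y p where "z = (x,y)" "p \<in> Q" "x \<in> p" "y \<in> p" unfolding Mat_def by blast
  moreover have "p \<subseteq> T" using pm_sub[OF a(1)] calculation by simp
  ultimately show "z \<in> HS \<times> HS" using a(2) by auto
qed

lemma abS': "a \<notin> S'" "b \<notin> S'" unfolding S'_def by auto
lemma S_eq: "S = insert a (insert b S')" using aS bS unfolding S'_def S_def by auto
lemma S'_sub: "S' \<subseteq> HS" using S_H unfolding S'_def by auto

lemma pm0: "perfect_matching S' P \<Longrightarrow> perfect_matching S (insert {a,b} P)"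
  using pm_insert[of S' P a b] abS' ab S_eq by simp

lemma cyc:
  assumes pm: "perfect_matching S' P" and x: "x \<in> S'"
  shows "Cy (insert {a,x} (insert {b, partner P x} (P - {{x, partner P x}}))) + 1 = Cy (insert {a,b} P)"
proof -
  define y where "y = partner P x"
  have xy: "{x,y} \<in> P" "y \<noteq> x" "y \<in> S'" using partner[OF pm x] unfolding y_def by auto
  have ax: "a \<noteq> x" "b \<noteq> y" using x xy abS' by auto
  define E1 where "E1 = B \<union> Mat (P - {{x,y}})"
  let ?sab = "{(a,b),(b,a)}" and ?sxy = "{(x,y),(y,x)}" and ?sax = "{(a,x),(x,a)}" and ?sby = "{(b,y),(y,b)}"
  have R0: "B \<union> Mat (insert {a,b} P) = (E1 \<union> ?sxy) \<union> ?sab"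
    unfolding E1_def using Mat_ins[OF ab, of P] Mat_rem[OF xy(1)] xy(2) by auto
  have RP: "B \<union> Mat (insert {a,x} (insert {b,y} (P - {{x,y}}))) = (E1 \<union> ?sax) \<union> ?sby"
    unfolding E1_def using Mat_ins[OF ax(1)] Mat_ins[OF ax(2)] by auto
  have E1ab: "(a,b) \<in> E1\<^sup>*" "(b,a) \<in> E1\<^sup>*"
  proof -
    have "B\<^sup>* \<subseteq> E1\<^sup>*" unfolding E1_def by (rule rtrancl_mono) auto
    then show "(a,b) \<in> E1\<^sup>*" "(b,a) \<in> E1\<^sup>*" using conn_ab sym_rt[OF B_sym conn_ab] by blast+
  qed
  have m1: "E1 \<subseteq> Y \<Longrightarrow> (p,q) \<in> E1\<^sup>* \<Longrightarrow> (p,q) \<in> Y\<^sup>*" for Y p q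
    using rtrancl_mono by blast
  have rr: "(p,q) \<in> Y \<Longrightarrow> (p,q) \<in> Y\<^sup>*" for Y p q by (rule r_into_rtrancl)
  have e0: "((E1 \<union> ?sxy) \<union> ?sab)\<^sup>* = (E1 \<union> ?sxy)\<^sup>*"
  proof (rule rtrancl_add_redundant)
    show "(a,b) \<in> (E1 \<union> ?sxy)\<^sup>*" by (rule m1[OF _ E1ab(1)]) blast
    show "(b,a) \<in> (E1 \<union> ?sxy)\<^sup>*" by (rule m1[OF _ E1ab(2)]) blast
  qed
  have e1: "((E1 \<union> ?sax) \<union> ?sby)\<^sup>* = ((E1 \<union> ?sxy) \<union> ?sax)\<^sup>*"
  proof -
    let ?T = "E1 \<union> ?sax"
    have s1: "(x,y) \<in> (?T \<union> ?sby)\<^sup>*" "(y,x) \<in> (?T \<union> ?sby)\<^sup>*"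
    proof -
      have "(x,a) \<in> (?T \<union> ?sby)\<^sup>*" "(a,x) \<in> (?T \<union> ?sby)\<^sup>*" "(b,y) \<in> (?T \<union> ?sby)\<^sup>*" "(y,b) \<in> (?T \<union> ?sby)\<^sup>*"
        by (rule rr; blast)+
      moreover have "(a,b) \<in> (?T \<union> ?sby)\<^sup>*" by (rule m1[OF _ E1ab(1)]) blast
      moreover have "(b,a) \<in> (?T \<union> ?sby)\<^sup>*" by (rule m1[OF _ E1ab(2)]) blast
      ultimately show "(x,y) \<in> (?T \<union> ?sby)\<^sup>*" "(y,x) \<in> (?T \<union> ?sby)\<^sup>*" by (meson rtrancl_trans)+
    qed
    have s2: "(b,y) \<in> (?T \<union> ?sxy)\<^sup>*" "(y,b) \<in> (?T \<union> ?sxy)\<^sup>*"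
    proof -
      have "(x,a) \<in> (?T \<union> ?sxy)\<^sup>*" "(a,x) \<in> (?T \<union> ?sxy)\<^sup>*" "(x,y) \<in> (?T \<union> ?sxy)\<^sup>*" "(y,x) \<in> (?T \<union> ?sxy)\<^sup>*"
        by (rule rr; blast)+
      moreover have "(a,b) \<in> (?T \<union> ?sxy)\<^sup>*" by (rule m1[OF _ E1ab(1)]) blast
      moreover have "(b,a) \<in> (?T \<union> ?sxy)\<^sup>*" by (rule m1[OF _ E1ab(2)]) blast
      ultimately show "(b,y) \<in> (?T \<union> ?sxy)\<^sup>*" "(y,b) \<in> (?T \<union> ?sxy)\<^sup>*" by (meson rtrancl_trans)+
    qed
    have "(?T \<union> ?sby)\<^sup>* = ((?T \<union> ?sby) \<union> ?sxy)\<^sup>*" using rtrancl_add_redundant[OF s1] by simp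
    also have "(?T \<union> ?sby) \<union> ?sxy = (?T \<union> ?sxy) \<union> ?sby" by blast
    also have "((?T \<union> ?sxy) \<union> ?sby)\<^sup>* = (?T \<union> ?sxy)\<^sup>*" using rtrancl_add_redundant[OF s2] by simp
    also have "?T \<union> ?sxy = (E1 \<union> ?sxy) \<union> ?sax" by blast
    finally show ?thesis .
  qed
  have pm0': "perfect_matching S (insert {a,b} P)" using pm0[OF pm] .
  have naxr: "(a,x) \<notin> (E1 \<union> ?sxy)\<^sup>*"
  proof
    assume "(a,x) \<in> (E1 \<union> ?sxy)\<^sup>*"
    then have "(a,x) \<in> (B \<union> Mat (insert {a,b} P))\<^sup>*" using R0 e0 by simp
    then have "x \<in> C0" using C0_reach[OF pm0'] by simp
    then show False using notC0 x by simp
  qed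
  have Psub: "Mat (insert {a,b} P) \<subseteq> HS \<times> HS" using Mat_sub[OF pm0'] S_H by simp
  have "E1 \<union> ?sxy \<subseteq> B \<union> Mat (insert {a,b} P)" unfolding R0 by blast
  then have sub: "E1 \<union> ?sxy \<subseteq> HS \<times> HS"
    using B_sub Psub by blast
  have symE: "sym (E1 \<union> ?sxy)"
    unfolding E1_def by (intro sym_Un B_sym Mat_sym) (auto simp: sym_def)
  have "card (HS // ((E1 \<union> ?sxy) \<union> ?sax)\<^sup>*) + 1 = card (HS // (E1 \<union> ?sxy)\<^sup>*)"
  proof (rule card_merge[OF sub symE finHS aH _ naxr])
    show "x \<in> HS" using x S'_sub by blast
  qed
  then show ?thesis unfolding Cy_eq y_def[symmetric] R0 RP e0 e1 .
qed

end


lemma card_filter_insert: "finite Q \<Longrightarrow> q \<notin> Q \<Longrightarrow>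
   card {p \<in> insert q Q. \<phi> p} = card {p \<in> Q. \<phi> p} + (if \<phi> q then 1 else 0)"
proof -
  assume f: "finite Q" and q: "q \<notin> Q"
  have e: "{p \<in> insert q Q. \<phi> p} = (if \<phi> q then insert q {p \<in> Q. \<phi> p} else {p \<in> Q. \<phi> p})" by auto
  show ?thesis unfolding e using f q by (cases "\<phi> q") (simp_all add: card_insert_if)
qed

context LS begin

definition "gP Q = card {p \<in> Q. \<forall>h\<in>p. is_G_half h}"
definition "dd = deg G v"

lemma Inl_halfs: "((Inl e, bb) \<in> halfs G H) = (e \<in> fst G)" by (simp add: halfs_def)
lemma Inr_halfs: "((Inr e, bb) \<in> halfs G H) = (e \<in> fst H)" by (simp add: halfs_def)

lemma cG: "card {x \<in> S. is_G_half x} = dd"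
proof -
  let ?A = "{(e, b). e \<in> fst G \<and> endpt G e b = v}"
  let ?f = "\<lambda>(e::'e,b::bool). ((Inl e :: 'e + 'f), b)"
  have "{x \<in> S. is_G_half x} = ?f ` ?A"
  proof (intro equalityI subsetI)
    fix x assume x: "x \<in> {x \<in> S. is_G_half x}"
    obtain s bb where xs: "x = (s, bb)" by (cases x)
    have "isl s" using x xs by (simp add: is_G_half_def)
    then obtain e where se: "s = Inl e" by (cases s) auto
    have "e \<in> fst G" "endpt G e bb = v" using x xs se
      by (simp_all add: S_def halfs_at_def Inl_halfs hvert_def)
    then have "(e, bb) \<in> ?A" by simp
    moreover have "x = ?f (e, bb)" using xs se by simp
    ultimately show "x \<in> ?f ` ?A" by (rule rev_image_eqI)
  next
    fix x assume "x \<in> ?f ` ?A"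
    then obtain p where p: "p \<in> ?A" "x = ?f p" by (rule imageE)
    obtain e bb where "p = (e, bb)" by (cases p)
    then have "(e, bb) \<in> ?A" "x = (Inl e, bb)" using p by simp_all
    then show "x \<in> {x \<in> S. is_G_half x}"
      by (simp add: S_def halfs_at_def Inl_halfs hvert_def is_G_half_def)
  qed
  moreover have "inj_on ?f ?A" by (rule inj_onI) auto
  ultimately have "card {x \<in> S. is_G_half x} = card ?A" by (simp add: card_image)
  then show ?thesis unfolding dd_def deg_def by simp
qed

lemma cH: "card {x \<in> S. \<not> is_G_half x} = dd"
proof -
  let ?A = "{(e, b). e \<in> fst H \<and> endpt H e b = v}"
  let ?f = "\<lambda>(e::'f,b::bool). ((Inr e :: 'e + 'f), b)"
  have "{x \<in> S. \<not> is_G_half x} = ?f ` ?A"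
  proof (intro equalityI subsetI)
    fix x assume x: "x \<in> {x \<in> S. \<not> is_G_half x}"
    obtain s bb where xs: "x = (s, bb)" by (cases x)
    have "\<not> isl s" using x xs by (simp add: is_G_half_def)
    then obtain e where se: "s = Inr e" by (cases s) auto
    have "e \<in> fst H" "endpt H e bb = v" using x xs se
      by (simp_all add: S_def halfs_at_def Inr_halfs hvert_def)
    then have "(e, bb) \<in> ?A" by simp
    moreover have "x = ?f (e, bb)" using xs se by simp
    ultimately show "x \<in> ?f ` ?A" by (rule rev_image_eqI)
  next
    fix x assume "x \<in> ?f ` ?A"
    then obtain p where p: "p \<in> ?A" "x = ?f p" by (rule imageE)
    obtain e bb where "p = (e, bb)" by (cases p)
    then have "(e, bb) \<in> ?A" "x = (Inr e, bb)" using p by simp_all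
    then show "x \<in> {x \<in> S. \<not> is_G_half x}"
      by (simp add: S_def halfs_at_def Inr_halfs hvert_def is_G_half_def)
  qed
  moreover have "inj_on ?f ?A" by (rule inj_onI) auto
  ultimately have "card {x \<in> S. \<not> is_G_half x} = card ?A" by (simp add: card_image)
  then show ?thesis unfolding dd_def using degeq vV by (simp add: deg_def)
qed

lemma finS: "finite S" using finHS S_H finite_subset by blast
lemma finS': "finite S'" using finS unfolding S'_def by auto

lemma cG': "card {x \<in> S'. is_G_half x} + 2 = dd"
proof -
  have "{x \<in> S. is_G_half x} = insert a (insert b {x \<in> S'. is_G_half x})"
    using S_eq Ga Gb by auto
  then show ?thesis using cG finS' abS' ab by simp
qed

lemma cH': "card {x \<in> S'. \<not> is_G_half x} = dd"
proof -
  have "{x \<in> S. \<not> is_G_half x} = {x \<in> S'. \<not> is_G_half x}"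
    using S_eq Ga Gb by auto
  then show ?thesis using cH by simp
qed

lemma cS': "card S' + 2 = 2 * dd"
proof -
  have "S' = {x \<in> S'. is_G_half x} \<union> {x \<in> S'. \<not> is_G_half x}" by auto
  then have "card S' = card {x \<in> S'. is_G_half x} + card {x \<in> S'. \<not> is_G_half x}"
    using finS' by (metis (no_types, lifting) card_Un_disjoint disjoint_iff finite_Un mem_Collect_eq)
  then show ?thesis using cG' cH' by simp
qed

lemma GG_count:
  assumes pm: "perfect_matching S' P"
  shows "card {x \<in> S'. is_G_half x \<and> is_G_half (partner P x)} = 2 * gP P"
proof -
  let ?A = "{p \<in> P. \<forall>h\<in>p. is_G_half h}"
  have eq: "{x \<in> S'. is_G_half x \<and> is_G_half (partner P x)} = \<Union> ?A"
  proof
    show "{x \<in> S'. is_G_half x \<and> is_G_half (partner P x)} \<subseteq> \<Union> ?A"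
    proof
      fix x assume x: "x \<in> {x \<in> S'. is_G_half x \<and> is_G_half (partner P x)}"
      then have "{x, partner P x} \<in> P" using partner[OF pm] by auto
      then show "x \<in> \<Union> ?A" using x by (intro UnionI[of "{x, partner P x}"]) auto
    qed
  next
    show "\<Union> ?A \<subseteq> {x \<in> S'. is_G_half x \<and> is_G_half (partner P x)}"
    proof
      fix x assume "x \<in> \<Union> ?A"
      then obtain p where p: "p \<in> P" "\<forall>h\<in>p. is_G_half h" "x \<in> p" by blast
      have "p = {x, partner P x}" using partner_in[OF pm p(1,3)] .
      then show "x \<in> {x \<in> S'. is_G_half x \<and> is_G_half (partner P x)}"
        using p pm_sub[OF pm p(1)] by auto
    qed
  qed
  have finP: "finite P" using finite_pms[OF finS'] pm
    by (metis (no_types, lifting) Pow_iff finite_Pow_iff finite_subset pm_sub subsetI finS')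
  have dis: "pairwise disjnt ?A"
    unfolding pairwise_def disjnt_def using pm_unique[OF pm] by blast
  have c2: "\<And>p. p \<in> ?A \<Longrightarrow> card p = 2" using pm unfolding perfect_matching_def by blast
  have "card (\<Union> ?A) = sum card ?A"
    by (rule card_Union_disjoint[OF dis]) (use c2 in \<open>auto intro: card_ge_0_finite\<close>)
  also have "\<dots> = 2 * gP P" unfolding gP_def using c2 by simp
  finally show ?thesis using eq by simp
qed

lemma pi_props:
  assumes pm: "perfect_matching S' P" and x: "x \<in> S'"
  shows "partner P x \<in> S'" "partner P (partner P x) = x"
proof -
  have "{x, partner P x} \<in> P" "partner P x \<noteq> x" "partner P x \<in> S'" using partner[OF pm x] by auto
  then show "partner P x \<in> S'" "partner P (partner P x) = x"
    using partner_eq[OF pm, of "partner P x" x] by (auto simp: insert_commute)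
qed

lemma HH_count:
  assumes pm: "perfect_matching S' P"
  shows "card {x \<in> S'. \<not> is_G_half x \<and> \<not> is_G_half (partner P x)} = 2 * gP P + 2"
    and "2 * gP P + 2 \<le> dd"
proof -
  let ?g = "is_G_half" and ?p = "partner P"
  let ?GH = "{x \<in> S'. ?g x \<and> \<not> ?g (?p x)}" and ?HG = "{x \<in> S'. \<not> ?g x \<and> ?g (?p x)}"
  let ?GG = "{x \<in> S'. ?g x \<and> ?g (?p x)}" and ?HH = "{x \<in> S'. \<not> ?g x \<and> \<not> ?g (?p x)}"
  have inj: "inj_on ?p S'" unfolding inj_on_def using pi_props[OF pm] by metis
  have f1: "?p ` ?GH \<subseteq> ?HG" using pi_props[OF pm] by auto
  have f2: "?p ` ?HG \<subseteq> ?GH" using pi_props[OF pm] by auto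
  have fin: "finite ?HG" "finite ?GH" using finS' by auto
  have "card ?GH \<le> card ?HG" by (rule card_inj_on_le[OF inj_on_subset[OF inj] f1 fin(1)]) auto
  moreover have "card ?HG \<le> card ?GH" by (rule card_inj_on_le[OF inj_on_subset[OF inj] f2 fin(2)]) auto
  ultimately have e: "card ?GH = card ?HG" by simp
  have "{x \<in> S'. ?g x} = ?GG \<union> ?GH" by auto
  then have c1: "card {x \<in> S'. ?g x} = card ?GG + card ?GH"
    using finS' by (subst card_Un_disjoint[symmetric]) auto
  have "{x \<in> S'. \<not> ?g x} = ?HH \<union> ?HG" by auto
  then have c2: "card {x \<in> S'. \<not> ?g x} = card ?HH + card ?HG"
    using finS' by (subst card_Un_disjoint[symmetric]) auto
  show "card ?HH = 2 * gP P + 2" "2 * gP P + 2 \<le> dd"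
    using c1 c2 e cG' cH' GG_count[OF pm] by linarith+
qed

lemma pm_fin: "finite T \<Longrightarrow> perfect_matching T P \<Longrightarrow> finite P"
  by (rule finite_subset[of _ "Pow T"]) (auto dest: pm_sub)

definition "Phi P x = insert {a,x} (insert {b, partner P x} (P - {{x, partner P x}}))"

lemma gP0: "perfect_matching S' P \<Longrightarrow> gP (insert {a,b} P) = gP P + 1"
proof -
  assume pm: "perfect_matching S' P"
  have "{a,b} \<notin> P" using pm_sub[OF pm] abS' by auto
  then show ?thesis unfolding gP_def using card_filter_insert[OF pm_fin[OF finS' pm]] Ga Gb by simp
qed

lemma gPhi: assumes pm: "perfect_matching S' P" and x: "x \<in> S'"
  shows "gP (Phi P x) = gP P + (if is_G_half x \<or> is_G_half (partner P x) then 1 else 0)"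
proof -
  define y where "y = partner P x"
  have xy: "{x,y} \<in> P" "y \<noteq> x" "y \<in> S'" using partner[OF pm x] unfolding y_def by auto
  have finP: "finite P" using pm_fin[OF finS' pm] .
  let ?\<phi> = "\<lambda>p. \<forall>h\<in>p. is_G_half h"
  have e1: "card {p \<in> P. ?\<phi> p} = card {p \<in> P - {{x,y}}. ?\<phi> p} + (if ?\<phi> {x,y} then 1 else 0)"
    using card_filter_insert[of "P - {{x,y}}" "{x,y}" ?\<phi>] finP xy(1) by (simp add: insert_absorb)
  have n1: "{b,y} \<notin> P - {{x,y}}" using pm_sub[OF pm] abS' by auto
  have n2: "{a,x} \<notin> insert {b,y} (P - {{x,y}})" using pm_sub[OF pm] abS' ab xy(3) by (auto simp: doubleton_eq_iff)
  have "card {p \<in> insert {a,x} (insert {b,y} (P - {{x,y}})). ?\<phi> p} =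
        card {p \<in> P - {{x,y}}. ?\<phi> p} + (if ?\<phi> {b,y} then 1 else 0) + (if ?\<phi> {a,x} then 1 else 0)"
    using card_filter_insert[OF _ n2, of ?\<phi>] card_filter_insert[OF _ n1, of ?\<phi>] finP by simp
  then show ?thesis unfolding gP_def Phi_def y_def[symmetric] using e1 Ga Gb by auto
qed

lemma ff2_Suc: "ff2 x (Suc k) = ff2 x k * (x - 2 * real k)"
  unfolding ff2_def by simp

definition "DD = real n + 2 * real dd - 4"
definition "ww k = ff2 (-2) k / ff2 DD k"
definition "FF Q = real n ^ Cy Q * ww (gP Q)"

lemma group_zero:
  assumes pm: "perfect_matching S' P"
  shows "FF (insert {a,b} P) + (\<Sum>x\<in>S'. FF (Phi P x)) = 0"
proof -
  define g where "g = gP P"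
  define c1 where "c1 = Cy (insert {a,b} P) - 1"
  have hh: "card {x \<in> S'. \<not> is_G_half x \<and> \<not> is_G_half (partner P x)} = 2 * g + 2" "2 * g + 2 \<le> dd"
    using HH_count[OF pm] unfolding g_def by auto
  have cs: "card S' + 2 = 2 * dd" using cS' .
  then have "S' \<noteq> {}" using hh(2) by auto
  then obtain x0 where "x0 \<in> S'" by blast
  then have cP0: "Cy (insert {a,b} P) = c1 + 1" using cyc[OF pm] unfolding c1_def by fastforce
  have cPhi: "\<And>x. x \<in> S' \<Longrightarrow> Cy (Phi P x) = c1" using cyc[OF pm] cP0 unfolding Phi_def by fastforce
  let ?HH = "{x \<in> S'. \<not> is_G_half x \<and> \<not> is_G_half (partner P x)}"
  have "(\<Sum>x\<in>S'. FF (Phi P x)) = (\<Sum>x\<in>S'. real n ^ c1 * (if x \<in> ?HH then ww g else ww (g+1)))"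
  proof (rule sum.cong[OF refl])
    fix x assume x: "x \<in> S'"
    show "FF (Phi P x) = real n ^ c1 * (if x \<in> ?HH then ww g else ww (g+1))"
      unfolding FF_def cPhi[OF x] gPhi[OF pm x] g_def using x by simp
  qed
  also have "\<dots> = real n ^ c1 * (\<Sum>x\<in>S'. (if x \<in> ?HH then ww g else ww (g+1)))"
    by (simp add: sum_distrib_left)
  also have "(\<Sum>x\<in>S'. (if x \<in> ?HH then ww g else ww (g+1))) = real (card ?HH) * ww g + real (card (S' - ?HH)) * ww (g+1)"
  proof -
    have "(\<Sum>x\<in>S'. (if x \<in> ?HH then ww g else ww (g+1))) = (\<Sum>x\<in>S' \<inter> {x. x \<in> ?HH}. ww g) + (\<Sum>x\<in>S' \<inter> - {x. x \<in> ?HH}. ww (g+1))"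
      using finS' by (rule sum.If_cases)
    also have "S' \<inter> {x. x \<in> ?HH} = ?HH" by blast
    also have "S' \<inter> - {x. x \<in> ?HH} = S' - ?HH" by blast
    finally have "(\<Sum>x\<in>S'. (if x \<in> ?HH then ww g else ww (g+1))) = (\<Sum>x\<in>?HH. ww g) + (\<Sum>x\<in>S' - ?HH. ww (g+1))" .
    then show ?thesis by simp
  qed
  also have "card (S' - ?HH) = card S' - card ?HH" using finS' by (simp add: card_Diff_subset)
  finally have s0: "(\<Sum>x\<in>S'. FF (Phi P x)) = real n ^ c1 * (real (card ?HH) * ww g + real (card S' - card ?HH) * ww (g+1))" .
  have "card S' = 2*dd - 2" using cs by simp
  then have s: "(\<Sum>x\<in>S'. FF (Phi P x)) = real n ^ c1 * (real (2*g+2) * ww g + real (2*dd - 2 - (2*g+2)) * ww (g+1))"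
    using s0 hh(1) by simp
  have f0: "FF (insert {a,b} P) = real n ^ c1 * (real n * ww (g+1))"
    unfolding FF_def cP0 gP0[OF pm] g_def by simp
  have Dpos: "DD - 2 * real g \<noteq> 0" unfolding DD_def using hh(2) n2 by simp
  have "(DD - 2 * real g) * ww (g+1) = - (2 * real g + 2) * ww g"
  proof -
    have "ww (g+1) = (ff2 (-2) g * (-2 - 2 * real g)) / ff2 DD g / (DD - 2 * real g)"
      unfolding ww_def by (simp add: ff2_Suc divide_divide_eq_left)
    then have "(DD - 2 * real g) * ww (g+1) = (ff2 (-2) g * (-2 - 2 * real g)) / ff2 DD g"
      using Dpos by simp
    also have "\<dots> = - (2 * real g + 2) * ww g" unfolding ww_def by (simp add: algebra_simps)
    finally show ?thesis .
  qed
  moreover have "real n + real (2*dd - 2 - (2*g+2)) = DD - 2 * real g"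
    unfolding DD_def using hh(2) by (simp add: of_nat_diff)
  ultimately have z: "real n * ww (g+1) + (real (2*g+2) * ww g + real (2*dd - 2 - (2*g+2)) * ww (g+1)) = 0"
  proof -
    assume h1: "(DD - 2 * real g) * ww (g+1) = - (2 * real g + 2) * ww g"
      and h2: "real n + real (2*dd - 2 - (2*g+2)) = DD - 2 * real g"
    have "real n * ww (g+1) + (real (2*g+2) * ww g + real (2*dd - 2 - (2*g+2)) * ww (g+1))
        = (real n + real (2*dd - 2 - (2*g+2))) * ww (g+1) + (2 * real g + 2) * ww g"
      by (simp add: algebra_simps)
    also have "\<dots> = 0" unfolding h2 h1 by (simp add: algebra_simps)
    finally show ?thesis .
  qed
  show ?thesis unfolding s f0 by (simp only: distrib_left[symmetric] z mult_zero_right)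
qed

end


context LS begin

definition "red Q = insert {partner Q a, partner Q b} (Q - {{a, partner Q a}} - {{b, partner Q b}})"

lemma Phi_props:
  assumes pm: "perfect_matching S' P" and x: "x \<in> S'"
  shows "perfect_matching S (Phi P x)" "{a,b} \<notin> Phi P x" "red (Phi P x) = P" "partner (Phi P x) a = x"
proof -
  define y where "y = partner P x"
  have xy: "{x,y} \<in> P" "y \<noteq> x" "y \<in> S'" using partner[OF pm x] unfolding y_def by auto
  have ne: "a \<noteq> x" "a \<noteq> y" "b \<noteq> x" "b \<noteq> y" using abS' x xy(3) by auto
  have subP: "\<And>p. p \<in> P \<Longrightarrow> p \<subseteq> S'" using pm_sub[OF pm] by blast
  define P1 where "P1 = P - {{x,y}}"
  have pm1: "perfect_matching (S' - {x,y}) P1" unfolding P1_def using pm_remove[OF pm xy(1)] xy(2) by simp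
  have pm2: "perfect_matching (insert b (insert y (S' - {x,y}))) (insert {b,y} P1)"
    by (rule pm_insert[OF pm1]) (use abS' ne in auto)
  have pm3: "perfect_matching (insert a (insert x (insert b (insert y (S' - {x,y}))))) (insert {a,x} (insert {b,y} P1))"
    by (rule pm_insert[OF pm2]) (use abS' ne ab xy(2) in auto)
  have Seq: "insert a (insert x (insert b (insert y (S' - {x,y})))) = S" using S_eq x xy(3) by blast
  have PhiE: "Phi P x = insert {a,x} (insert {b,y} P1)" unfolding Phi_def P1_def y_def by simp
  show "perfect_matching S (Phi P x)" using pm3 unfolding Seq PhiE .
  have n1: "{a,x} \<notin> P" "{b,y} \<notin> P" "{a,b} \<notin> P" using subP abS' by blast+
  have n2: "{a,x} \<noteq> {b,y}" "{a,b} \<noteq> {a,x}" "{a,b} \<noteq> {b,y}" using ab ne by (auto simp: doubleton_eq_iff)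
  show "{a,b} \<notin> Phi P x" unfolding PhiE P1_def using n1 n2 by blast
  have pmPhi: "perfect_matching S (Phi P x)" using pm3 unfolding Seq PhiE .
  have pa: "partner (Phi P x) a = x" by (rule partner_eq[OF pmPhi]) (use ne in \<open>auto simp: PhiE\<close>)
  then show "partner (Phi P x) a = x" .
  have pb: "partner (Phi P x) b = y" by (rule partner_eq[OF pmPhi]) (use ne in \<open>auto simp: PhiE\<close>)
  have "Phi P x - {{a,x}} - {{b,y}} = P1" unfolding PhiE P1_def using n1 n2 by blast
  then show "red (Phi P x) = P" unfolding red_def pa pb using xy(1) unfolding P1_def by blast
qed

lemma red_props:
  assumes pm: "perfect_matching S Q" and nab: "{a,b} \<notin> Q"
  shows "perfect_matching S' (red Q)" "partner Q a \<in> S'" "Phi (red Q) (partner Q a) = Q"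
proof -
  define pa where "pa = partner Q a"
  define pb where "pb = partner Q b"
  have aS': "a \<in> S" "b \<in> S" using S_eq by auto
  have A: "{a,pa} \<in> Q" "pa \<noteq> a" "pa \<in> S" using partner[OF pm aS'(1)] unfolding pa_def by auto
  have Bq: "{b,pb} \<in> Q" "pb \<noteq> b" "pb \<in> S" using partner[OF pm aS'(2)] unfolding pb_def by auto
  have pab: "pa \<noteq> b" using A nab by auto
  have pba: "pb \<noteq> a" using Bq nab by (auto simp: insert_commute)
  have pne: "pa \<noteq> pb"
  proof
    assume "pa = pb"
    then have "{a,pa} = {b,pb}" using pm_unique[OF pm A(1) Bq(1), of pa] by simp
    then show False using ab A(2) pab by (auto simp: doubleton_eq_iff)
  qed
  have ne2: "{a,pa} \<noteq> {b,pb}" using ab pab by (auto simp: doubleton_eq_iff)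
  define Q1 where "Q1 = Q - {{a,pa}}"
  have pm1: "perfect_matching (S - {a,pa}) Q1" unfolding Q1_def using pm_remove[OF pm A(1)] A(2) by simp
  have bQ1: "{b,pb} \<in> Q1" unfolding Q1_def using Bq(1) ne2 by simp
  define Q2 where "Q2 = Q1 - {{b,pb}}"
  have pm2: "perfect_matching (S - {a,pa} - {b,pb}) Q2" unfolding Q2_def using pm_remove[OF pm1 bQ1] Bq(2) by simp
  have pm3: "perfect_matching (insert pa (insert pb (S - {a,pa} - {b,pb}))) (insert {pa,pb} Q2)"
    by (rule pm_insert[OF pm2]) (use pne in auto)
  have Seq: "insert pa (insert pb (S - {a,pa} - {b,pb})) = S'"
    unfolding S'_def using A(2,3) Bq(2,3) pab pba by blast
  have redE: "red Q = insert {pa,pb} Q2" unfolding red_def Q2_def Q1_def pa_def pb_def by simp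
  show pmr: "perfect_matching S' (red Q)" using pm3 unfolding Seq redE .
  show "partner Q a \<in> S'" unfolding pa_def[symmetric] S'_def using A(2,3) pab by blast
  have pr: "partner (red Q) pa = pb" by (rule partner_eq[OF pmr]) (use pne in \<open>auto simp: redE\<close>)
  have npq: "{pa,pb} \<notin> Q2"
  proof
    assume "{pa,pb} \<in> Q2"
    then have "{pa,pb} \<in> Q" unfolding Q2_def Q1_def by blast
    then have "{a,pa} = {pa,pb}" using pm_unique[OF pm A(1), of "{pa,pb}" pa] by simp
    then show False using A(2) pba by (auto simp: doubleton_eq_iff)
  qed
  have "red Q - {{pa,pb}} = Q2" unfolding redE using npq by blast
  then have "Phi (red Q) pa = insert {a,pa} (insert {b,pb} Q2)" unfolding Phi_def pr by simp
  also have "\<dots> = Q" unfolding Q2_def Q1_def using A(1) Bq(1) by blast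
  finally show "Phi (red Q) (partner Q a) = Q" unfolding pa_def .
qed

lemma sum_zero: "(\<Sum>Q\<in>{Q. perfect_matching S Q}. FF Q) = 0"
proof -
  let ?PS = "{Q. perfect_matching S Q}" and ?PS' = "{P. perfect_matching S' P}"
  have finPS: "finite ?PS" using finite_pms[OF finS] .
  have finPS': "finite ?PS'" using finite_pms[OF finS'] .
  have split: "(\<Sum>Q\<in>?PS. FF Q) = (\<Sum>Q\<in>?PS \<inter> {Q. {a,b} \<in> Q}. FF Q) + (\<Sum>Q\<in>?PS - {Q. {a,b} \<in> Q}. FF Q)"
    by (rule sum.Int_Diff[OF finPS])
  have s0: "(\<Sum>P\<in>?PS'. FF (insert {a,b} P)) = (\<Sum>Q\<in>?PS \<inter> {Q. {a,b} \<in> Q}. FF Q)"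
  proof (rule sum.reindex_bij_witness[where j="insert {a,b}" and i="\<lambda>Q. Q - {{a,b}}"])
    fix P assume P: "P \<in> ?PS'"
    have "{a,b} \<notin> P" using pm_sub[of S' P] P abS' by blast
    then show "insert {a,b} P - {{a,b}} = P" by simp
    show "insert {a,b} P \<in> ?PS \<inter> {Q. {a,b} \<in> Q}" using pm0 P by simp
  next
    fix Q assume Q: "Q \<in> ?PS \<inter> {Q. {a,b} \<in> Q}"
    then show "insert {a,b} (Q - {{a,b}}) = Q" by blast
    have "perfect_matching (S - {a,b}) (Q - {{a,b}})" using pm_remove[of S Q a b] Q ab by simp
    then show "Q - {{a,b}} \<in> ?PS'" unfolding S'_def by simp
  qed simp
  have s1: "(\<Sum>(P,x)\<in>Sigma ?PS' (\<lambda>_. S'). FF (Phi P x)) = (\<Sum>Q\<in>?PS - {Q. {a,b} \<in> Q}. FF Q)"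
  proof (rule sum.reindex_bij_witness[where j="\<lambda>(P,x). Phi P x" and i="\<lambda>Q. (red Q, partner Q a)"])
    fix t assume t: "t \<in> Sigma ?PS' (\<lambda>_. S')"
    obtain P x where tP: "t = (P,x)" by (cases t)
    have P: "perfect_matching S' P" "x \<in> S'" using t tP by auto
    show "(red ((\<lambda>(P,x). Phi P x) t), partner ((\<lambda>(P,x). Phi P x) t) a) = t"
      using Phi_props[OF P] tP by simp
    show "(\<lambda>(P,x). Phi P x) t \<in> ?PS - {Q. {a,b} \<in> Q}"
      using Phi_props[OF P] tP by simp
    show "FF ((\<lambda>(P,x). Phi P x) t) = (case t of (P,x) \<Rightarrow> FF (Phi P x))" using tP by simp
  next
    fix Q assume Q: "Q \<in> ?PS - {Q. {a,b} \<in> Q}"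
    then have Q': "perfect_matching S Q" "{a,b} \<notin> Q" by auto
    show "(\<lambda>(P,x). Phi P x) (red Q, partner Q a) = Q" using red_props[OF Q'] by simp
    show "(red Q, partner Q a) \<in> Sigma ?PS' (\<lambda>_. S')" using red_props[OF Q'] by simp
  qed
  have s2: "(\<Sum>P\<in>?PS'. \<Sum>x\<in>S'. FF (Phi P x)) = (\<Sum>(P,x)\<in>Sigma ?PS' (\<lambda>_. S'). FF (Phi P x))"
    by (rule sum.Sigma[OF finPS']) (use finS' in simp)
  have "(\<Sum>Q\<in>?PS. FF Q) = (\<Sum>P\<in>?PS'. FF (insert {a,b} P)) + (\<Sum>P\<in>?PS'. \<Sum>x\<in>S'. FF (Phi P x))"
    using split s0 s1 s2 by simp
  also have "\<dots> = (\<Sum>P\<in>?PS'. FF (insert {a,b} P) + (\<Sum>x\<in>S'. FF (Phi P x)))"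
    by (rule sum.distrib[symmetric])
  also have "\<dots> = 0" using group_zero by simp
  finally show ?thesis .
qed

lemma Mx_v: "Mx Q v = Q" by (simp add: Mx_def)
lemma Mx_w: "w \<in> V - {v} \<Longrightarrow> Mx Q w = M' w" by (simp add: Mx_def)
lemma Mx_out: "w \<notin> V \<Longrightarrow> Mx Q w = {}" using vV by (auto simp: Mx_def)

lemma cM_Mx:
  "cM V G H n (Mx Q) = FF Q * (\<Prod>w\<in>V - {v}. ff2 (-2) (gM M' w) / ff2 (real n + 2 * real (deg G w) - 4) (gM M' w))"
proof -
  let ?f = "\<lambda>w. ff2 (-2) (gM (Mx Q) w) / ff2 (real n + 2 * real (deg G w) - 4) (gM (Mx Q) w)"
  have "prod ?f V = ?f v * prod ?f (V - {v})" by (rule prod.remove[OF finV vV])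
  also have "?f v = ww (gP Q)" unfolding ww_def DD_def gM_def gP_def Mx_v dd_def ..
  also have "prod ?f (V - {v}) = (\<Prod>w\<in>V - {v}. ff2 (-2) (gM M' w) / ff2 (real n + 2 * real (deg G w) - 4) (gM M' w))"
    by (rule prod.cong[OF refl]) (simp add: gM_def Mx_w)
  finally show ?thesis unfolding cM_def FF_def Cy_def by simp
qed

lemma final: "(\<Sum>M\<in>{M \<in> PM V G H. \<forall>w\<in>V - {v}. M w = M' w}. cM V G H n M) = 0"
proof -
  let ?K = "(\<Prod>w\<in>V - {v}. ff2 (-2) (gM M' w) / ff2 (real n + 2 * real (deg G w) - 4) (gM M' w))"
  have "(\<Sum>Q\<in>{Q. perfect_matching S Q}. cM V G H n (Mx Q)) = (\<Sum>M\<in>{M \<in> PM V G H. \<forall>w\<in>V - {v}. M w = M' w}. cM V G H n M)"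
  proof (rule sum.reindex_bij_witness[where j="Mx" and i="\<lambda>M. M v"])
    fix Q assume Q: "Q \<in> {Q. perfect_matching S Q}"
    show "Mx Q v = Q" by (rule Mx_v)
    have "\<forall>w\<in>V. perfect_matching (halfs_at G H w) (Mx Q w)"
    proof
      fix w assume w: "w \<in> V"
      show "perfect_matching (halfs_at G H w) (Mx Q w)"
      proof (cases "w = v")
        case True then show ?thesis using Q by (simp add: Mx_v S_def)
      next
        case False then show ?thesis using w M'pm by (simp add: Mx_w)
      qed
    qed
    moreover have "\<forall>w. w \<notin> V \<longrightarrow> Mx Q w = {}" using Mx_out by blast
    moreover have "\<forall>w\<in>V - {v}. Mx Q w = M' w" using Mx_w by blast
    ultimately show "Mx Q \<in> {M \<in> PM V G H. \<forall>w\<in>V - {v}. M w = M' w}" unfolding PM_def by blast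
  next
    fix M assume M: "M \<in> {M \<in> PM V G H. \<forall>w\<in>V - {v}. M w = M' w}"
    then have M1: "\<forall>w\<in>V. perfect_matching (halfs_at G H w) (M w)" "\<forall>w. w \<notin> V \<longrightarrow> M w = {}"
      "\<forall>w\<in>V - {v}. M w = M' w" unfolding PM_def by auto
    show "Mx (M v) = M"
    proof
      fix w show "Mx (M v) w = M w"
      proof (cases "w \<in> V")
        case True then show ?thesis using M1(3) by (cases "w = v") (simp_all add: Mx_v Mx_w)
      next
        case False then show ?thesis using M1(2) Mx_out by simp
      qed
    qed
    show "M v \<in> {Q. perfect_matching S Q}" using M1(1) vV by (simp add: S_def)
  qed simp
  moreover have "(\<Sum>Q\<in>{Q. perfect_matching S Q}. cM V G H n (Mx Q)) = (\<Sum>Q\<in>{Q. perfect_matching S Q}. FF Q) * ?K"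
    unfolding cM_Mx by (rule sum_distrib_right[symmetric])
  ultimately show ?thesis using sum_zero by simp
qed

end

theorem mainTheorem11:
  fixes V :: "'v set" and G :: "('v, 'e) mgraph" and H :: "('v, 'f) mgraph"
    and n :: nat and v :: 'v and M' :: "'v \<Rightarrow> ('e, 'f) half set set"
  assumes "finite V"
    and "loopless_multigraph V G" and "loopless_multigraph V H"
    and "\<forall>w\<in>V. deg G w = deg H w"
    and "n \<ge> 2"
    and "v \<in> V"
    and "\<forall>w\<in>V - {v}. perfect_matching (halfs_at G H w) (M' w)"
    and "\<exists>h h'. h \<in> halfs_at G H v \<and> h' \<in> halfs_at G H v \<and> h \<noteq> h' \<and>
           is_G_half h \<and> is_G_half h' \<and> induced_pair G H M' v h h'"
  shows "(\<Sum>M\<in>{M \<in> PM V G H. \<forall>w\<in>V - {v}. M w = M' w}. cM V G H n M) = 0"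
proof -
  from assms(8) obtain h h' where hh: "h \<in> halfs_at G H v" "h' \<in> halfs_at G H v" "h \<noteq> h'"
    "is_G_half h" "is_G_half h'" "induced_pair G H M' v h h'" by blast
  interpret L: LS V G H n v M' h h'
    by (unfold_locales) (use assms hh in auto)
  show ?thesis by (rule L.final)
qed

end
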